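(* Let $\tau$ be a subgrid tensor whose deviatoric part is $$\tau^d = \Big(2g - 3v_1\frac{\partial g}{\partial v_1} - 2v_3\frac{\partial g}{\partial v_3} - 3v_4\frac{\partial g}{\partial v_4}\Big) S + \frac{3}{|S|}\frac{\partial g}{\partial v_1}(S^2)^d + \frac{1}{|S|}\frac{\partial g}{\partial v_4}(\Omega^2)^d,$$ where $g$ is a (differentiable) scalar function of $(v_1,v_3,v_4)$, with $|S|=\sqrt{\operatorname{tr}(S^2)}$, $v_1=\operatorname{tr}(S^3)/|S|^3$, $v_3=\operatorname{tr}(\Omega^2)/|S|^2$, $v_4=\operatorname{tr}(S\Omega^2)/|S|^3$. Then $\tau$ is invariant under the symmetry groups $G_t$, $Gal$, $SO(3)$ and $G_p$, and derives from a scalar potential.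
   Context: Consider the filtered incompressible Navier–Stokes equations on $\mathbb R^3$: $\partial_t u + \nabla\cdot(u\otimes u) + \frac1\rho \nabla p - 2\nu\,\nabla\cdot S + \nabla\cdot\tau = 0$, $\nabla\cdot u=0$, where $u(t,x)\in\mathbb R^3$ is the filtered velocity, $p$ the filtered pressure, $\nu>0$ the kinematic viscosity, $\rho>0$ the density, $S=\frac12(\nabla u+\nabla u^T)$ the (filtered) strain-rate tensor, $\Omega=\frac12(\nabla u-\nabla u^T)$ the (filtered) vorticity tensor, and $\tau$ the subgrid tensor, modelled as a tensor-valued function of $(S,\Omega)$. The following groups act on $(t,x,u,p)$: time translations $G_t$: $(t,x,u,p)\mapsto(t+\epsilon,x,u,p)$; the generalized Galilean group $Gal$: $(t,x,u,p)\mapsto(t,x+\alpha(t),u+\dot\alpha(t),p-\rho\,\ddot\alpha(t)\cdot x)$, $\alpha\in C^2(\mathbb R,\mathbb R^3)$; rotations $SO(3)$: $(t,x,u,p)\mapsto(t,Rx,Ru,p)$, $R\in SO(3)$; pressure translations $G_p$: $(t,x,u,p)\mapsto(t,x,u,p+\xi(t))$, $\xi\in C^0(\mathbb R,\mathbb R)$. A model $\tau$ is called invariant under such a group $G$ if every element of $G$, acting on $(t,x,u,p)$, is a symmetry of the filtered equations with that model. For a $3\times3$ matrix $Q$, $Q^d=Q-\frac13\operatorname{tr}(Q)I$. The model $\tau$ derives from a scalar potential if there is a real function $\phi(S,\Omega)$ with $\tau^d=(\partial\phi/\partial S)^d$, where $\partial\phi/\partial S$ is the symmetric matrix $B$ such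 that $\phi(S+H,\Omega)=\phi(S,\Omega)+\operatorname{tr}(BH)+o(H)$ for symmetric $H$. *)

theory Defs
  imports "HOL-Analysis.Analysis"
begin

type_synonym vec3 = "real ^ 3"
type_synonym mat3 = "real ^ 3 ^ 3"

definition sym_mat :: "mat3 \<Rightarrow> bool" where
  "sym_mat Q \<longleftrightarrow> transpose Q = Q"

definition skew_mat :: "mat3 \<Rightarrow> bool" where
  "skew_mat Q \<longleftrightarrow> transpose Q = - Q"

definition dev :: "mat3 \<Rightarrow> mat3" where
  "dev Q = Q - (trace Q / 3) *\<^sub>R mat 1"

definition mnorm :: "mat3 \<Rightarrow> real" where
  "mnorm S = sqrt (trace (S ** S))"

definition invs :: "mat3 \<Rightarrow> mat3 \<Rightarrow> real \<times> real \<times> real" where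
  "invs S W = (trace (S ** S ** S) / mnorm S ^ 3,
               trace (W ** W) / mnorm S ^ 2,
               trace (S ** W ** W) / mnorm S ^ 3)"

text \<open>The subgrid model of the theorem.  g is the scalar function of (v1,v3,v4) and
  g' v is its (Frechet) derivative at v, so that the partial derivatives are
  dg/dv1 = g' v (1,0,0), dg/dv3 = g' v (0,1,0), dg/dv4 = g' v (0,0,1).\<close>
definition model ::
  "(real \<times> real \<times> real \<Rightarrow> real) \<Rightarrow> (real \<times> real \<times> real \<Rightarrow> real \<times> real \<times> real \<Rightarrow> real)
   \<Rightarrow> mat3 \<Rightarrow> mat3 \<Rightarrow> mat3" where
  "model g g' S W =
    (let v = invs S W; v1 = fst v; v3 = fst (snd v); v4 = snd (snd v);
         g1 = g' v (1, 0, 0); g3 = g' v (0, 1, 0); g4 = g' v (0, 0, 1)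
     in (2 * g v - 3 * v1 * g1 - 2 * v3 * g3 - 3 * v4 * g4) *\<^sub>R S
        + (3 / mnorm S * g1) *\<^sub>R dev (S ** S)
        + (1 / mnorm S * g4) *\<^sub>R dev (W ** W))"

text \<open>Velocity field u t x, pressure field p t x.  The spatial gradient matrix
  (grad u)_{ij} = d u_i / d x_j.\<close>
definition gradu :: "(real \<Rightarrow> vec3 \<Rightarrow> vec3) \<Rightarrow> real \<Rightarrow> vec3 \<Rightarrow> mat3" where
  "gradu u t x = jacobian (u t) (at x)"

definition strain :: "(real \<Rightarrow> vec3 \<Rightarrow> vec3) \<Rightarrow> real \<Rightarrow> vec3 \<Rightarrow> mat3" where
  "strain u t x = (1/2) *\<^sub>R (gradu u t x + transpose (gradu u t x))"

definition vort :: "(real \<Rightarrow> vec3 \<Rightarrow> vec3) \<Rightarrow> real \<Rightarrow> vec3 \<Rightarrow> mat3" where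
  "vort u t x = (1/2) *\<^sub>R (gradu u t x - transpose (gradu u t x))"

definition div_tensor :: "(vec3 \<Rightarrow> mat3) \<Rightarrow> vec3 \<Rightarrow> vec3" where
  "div_tensor F x = (\<chi> i. \<Sum>j\<in>UNIV. frechet_derivative F (at x) (axis j 1) $ i $ j)"

definition div_vec :: "(vec3 \<Rightarrow> vec3) \<Rightarrow> vec3 \<Rightarrow> real" where
  "div_vec f x = (\<Sum>j\<in>UNIV. frechet_derivative f (at x) (axis j 1) $ j)"

definition grad_scalar :: "(vec3 \<Rightarrow> real) \<Rightarrow> vec3 \<Rightarrow> vec3" where
  "grad_scalar f x = (\<chi> j. frechet_derivative f (at x) (axis j 1))"

definition outer :: "vec3 \<Rightarrow> vec3 \<Rightarrow> mat3" where
  "outer a b = (\<chi> i j. a $ i * b $ j)"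

text \<open>Regularity: u is jointly (Frechet) differentiable in (t,x),
  and the spatial fields S, p, u (x) u and tau(S,Omega) are differentiable in x, so that every
  term of the equations exists classically.\<close>
definition filtered_NS ::
  "real \<Rightarrow> real \<Rightarrow> (mat3 \<Rightarrow> mat3 \<Rightarrow> mat3) \<Rightarrow> (real \<Rightarrow> vec3 \<Rightarrow> vec3) \<Rightarrow> (real \<Rightarrow> vec3 \<Rightarrow> real) \<Rightarrow> bool"
  where
  "filtered_NS \<nu> \<rho> \<tau> u p \<longleftrightarrow>
    (\<forall>t x.
       (\<lambda>z. u (fst z) (snd z)) differentiable (at (t, x)) \<and>
       (\<lambda>y. strain u t y) differentiable (at x) \<and>
       (\<lambda>y. p t y) differentiable (at x) \<and>
       (\<lambda>y. \<tau> (strain u t y) (vort u t y)) differentiable (at x) \<and>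
       vector_derivative (\<lambda>s. u s x) (at t)
         + div_tensor (\<lambda>y. outer (u t y) (u t y)) x
         + (1 / \<rho>) *\<^sub>R grad_scalar (p t) x
         - (2 * \<nu>) *\<^sub>R div_tensor (\<lambda>y. strain u t y) x
         + div_tensor (\<lambda>y. \<tau> (strain u t y) (vort u t y)) x = 0 \<and>
       div_vec (u t) x = 0)"

text \<open>Time translations: the image of the solution under (t,x,u,p) -> (t+eps,x,u,p).\<close>
definition invariant_Gt :: "real \<Rightarrow> real \<Rightarrow> (mat3 \<Rightarrow> mat3 \<Rightarrow> mat3) \<Rightarrow> bool" where
  "invariant_Gt \<nu> \<rho> \<tau> \<longleftrightarrow>
    (\<forall>\<epsilon> u p. filtered_NS \<nu> \<rho> \<tau> u p \<longrightarrow>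
       filtered_NS \<nu> \<rho> \<tau> (\<lambda>t x. u (t - \<epsilon>) x) (\<lambda>t x. p (t - \<epsilon>) x))"

text \<open>Generalized Galilean transformations, alpha in C^2 with derivatives alpha1, alpha2.
  Image of the solution under (t,x,u,p) -> (t, x + alpha t, u + alpha' t, p - rho alpha'' t . x).\<close>
definition C2_curve :: "(real \<Rightarrow> vec3) \<Rightarrow> (real \<Rightarrow> vec3) \<Rightarrow> (real \<Rightarrow> vec3) \<Rightarrow> bool" where
  "C2_curve \<alpha> \<alpha>1 \<alpha>2 \<longleftrightarrow>
    (\<forall>t. (\<alpha> has_vector_derivative \<alpha>1 t) (at t)) \<and>
    (\<forall>t. (\<alpha>1 has_vector_derivative \<alpha>2 t) (at t)) \<and> continuous_on UNIV \<alpha>2"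

definition invariant_Gal :: "real \<Rightarrow> real \<Rightarrow> (mat3 \<Rightarrow> mat3 \<Rightarrow> mat3) \<Rightarrow> bool" where
  "invariant_Gal \<nu> \<rho> \<tau> \<longleftrightarrow>
    (\<forall>\<alpha> \<alpha>1 \<alpha>2 u p. C2_curve \<alpha> \<alpha>1 \<alpha>2 \<longrightarrow> filtered_NS \<nu> \<rho> \<tau> u p \<longrightarrow>
       filtered_NS \<nu> \<rho> \<tau>
         (\<lambda>t y. u t (y - \<alpha> t) + \<alpha>1 t)
         (\<lambda>t y. p t (y - \<alpha> t) - \<rho> * (\<alpha>2 t \<bullet> (y - \<alpha> t))))"

definition SO3 :: "mat3 set" where
  "SO3 = {R. transpose R ** R = mat 1 \<and> det R = 1}"

definition invariant_SO3 :: "real \<Rightarrow> real \<Rightarrow> (mat3 \<Rightarrow> mat3 \<Rightarrow> mat3) \<Rightarrow> bool" where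
  "invariant_SO3 \<nu> \<rho> \<tau> \<longleftrightarrow>
    (\<forall>R \<in> SO3. \<forall>u p. filtered_NS \<nu> \<rho> \<tau> u p \<longrightarrow>
       filtered_NS \<nu> \<rho> \<tau>
         (\<lambda>t y. R *v u t (transpose R *v y))
         (\<lambda>t y. p t (transpose R *v y)))"

definition invariant_Gp :: "real \<Rightarrow> real \<Rightarrow> (mat3 \<Rightarrow> mat3 \<Rightarrow> mat3) \<Rightarrow> bool" where
  "invariant_Gp \<nu> \<rho> \<tau> \<longleftrightarrow>
    (\<forall>\<xi> u p. continuous_on UNIV (\<xi> :: real \<Rightarrow> real) \<longrightarrow> filtered_NS \<nu> \<rho> \<tau> u p \<longrightarrow>
       filtered_NS \<nu> \<rho> \<tau> u (\<lambda>t y. p t y + \<xi> t))"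

definition is_dphi_dS :: "(mat3 \<Rightarrow> mat3 \<Rightarrow> real) \<Rightarrow> mat3 \<Rightarrow> mat3 \<Rightarrow> mat3 \<Rightarrow> bool" where
  "is_dphi_dS \<phi> S W B \<longleftrightarrow> sym_mat B \<and>
     ((\<lambda>H. (\<phi> (S + H) W - \<phi> S W - trace (B ** H)) / norm H) \<longlongrightarrow> 0)
        (at 0 within {H. sym_mat H})"

text \<open>Derivation from a scalar potential, at all admissible (filtered) arguments:
  S symmetric, traceless (incompressibility) and nonzero (the model is singular at S = 0),
  Omega antisymmetric.\<close>
definition derives_from_potential :: "(mat3 \<Rightarrow> mat3 \<Rightarrow> mat3) \<Rightarrow> bool" where
  "derives_from_potential \<tau> \<longleftrightarrow>
    (\<exists>\<phi>. \<forall>S W. sym_mat S \<longrightarrow> trace S = 0 \<longrightarrow> S \<noteq> 0 \<longrightarrow> skew_mat W \<longrightarrow>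
       (\<exists>B. is_dphi_dS \<phi> S W B \<and> dev (\<tau> S W) = dev B))"

end

theory Submission
  imports Defs
begin

definition DU :: "(real \<Rightarrow> vec3 \<Rightarrow> vec3) \<Rightarrow> real \<Rightarrow> vec3 \<Rightarrow> real \<times> vec3 \<Rightarrow> vec3" where
  "DU u t x = frechet_derivative (\<lambda>z. u (fst z) (snd z)) (at (t, x))"

lemma NS_joint: "filtered_NS \<nu> \<rho> \<tau> u p \<Longrightarrow> ((\<lambda>z. u (fst z) (snd z)) has_derivative DU u t x) (at (t, x))"
  unfolding filtered_NS_def DU_def using frechet_derivative_works by blast

lemma NS_space: assumes "filtered_NS \<nu> \<rho> \<tau> u p"
  shows "(u t has_derivative (\<lambda>h. DU u t x (0, h))) (at x)"
proof -
  have "((\<lambda>y. (t, y)) has_derivative (\<lambda>h. (0, h))) (at x)"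
    by (auto intro!: derivative_eq_intros)
  from has_derivative_compose[OF this NS_joint[OF assms]] show ?thesis by simp
qed

lemma NS_time: assumes "filtered_NS \<nu> \<rho> \<tau> u p"
  shows "((\<lambda>s. u s x) has_derivative (\<lambda>h. DU u t x (h, 0))) (at t)"
proof -
  have "((\<lambda>s. (s, x)) has_derivative (\<lambda>h. (h, 0))) (at t)"
    by (auto intro!: derivative_eq_intros)
  from has_derivative_compose[OF this NS_joint[OF assms]] show ?thesis by simp
qed

lemma NS_vd: assumes "filtered_NS \<nu> \<rho> \<tau> u p"
  shows "vector_derivative (\<lambda>s. u s x) (at t) = DU u t x (1, 0)"
proof -
  have "((\<lambda>s. u s x) has_vector_derivative DU u t x (1, 0)) (at t)"
    unfolding has_vector_derivative_def
  proof (rule has_derivative_eq_rhs[OF NS_time[OF assms]])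
    have l: "linear (DU u t x)" using NS_joint[OF assms] has_derivative_linear by blast
    show "(\<lambda>h. DU u t x (h, 0)) = (\<lambda>h. h *\<^sub>R DU u t x (1, 0))"
      proof (rule ext)
      fix h :: real have "(h, 0::vec3) = h *\<^sub>R (1, 0)" by simp
      then show "DU u t x (h, 0) = h *\<^sub>R DU u t x (1, 0)" using linear_cmul[OF l] by metis
    qed
  qed
  thus ?thesis by (rule vector_derivative_at)
qed

lemma NS_hvd: assumes "filtered_NS \<nu> \<rho> \<tau> u p"
  shows "((\<lambda>s. u s x) has_vector_derivative vector_derivative (\<lambda>s. u s x) (at t)) (at t)"
  using NS_time[OF assms] vector_derivative_works differentiableI by blast

lemma div_tensor_hd: "(F has_derivative F') (at x) \<Longrightarrow> div_tensor F x = (\<chi> i. \<Sum>j\<in>UNIV. F' (axis j 1) $ i $ j)"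
  unfolding div_tensor_def by (drule frechet_derivative_at) simp

lemma div_vec_hd: "(F has_derivative F') (at x) \<Longrightarrow> div_vec F x = (\<Sum>j\<in>UNIV. F' (axis j 1) $ j)"
  unfolding div_vec_def by (drule frechet_derivative_at) simp

lemma grad_scalar_hd: "(F has_derivative F') (at x) \<Longrightarrow> grad_scalar F x = (\<chi> j. F' (axis j 1))"
  unfolding grad_scalar_def by (drule frechet_derivative_at) simp

lemma gradu_hd: "(u t has_derivative F') (at x) \<Longrightarrow> gradu u t x = matrix F'"
  unfolding gradu_def jacobian_def by (drule frechet_derivative_at) simp

lemma Gt: "invariant_Gt \<nu> \<rho> \<tau>"
  unfolding invariant_Gt_def
proof (intro allI impI)
  fix \<epsilon> u p assume ns: "filtered_NS \<nu> \<rho> \<tau> u p"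
  show "filtered_NS \<nu> \<rho> \<tau> (\<lambda>t x. u (t - \<epsilon>) x) (\<lambda>t x. p (t - \<epsilon>) x)"
    unfolding filtered_NS_def
  proof (intro allI)
    fix t x
    have S: "strain (\<lambda>t x. u (t - \<epsilon>) x) t = strain u (t - \<epsilon>)"
      by (simp add: strain_def gradu_def fun_eq_iff)
    have W: "vort (\<lambda>t x. u (t - \<epsilon>) x) t = vort u (t - \<epsilon>)"
      by (simp add: vort_def gradu_def fun_eq_iff)
    have j: "(\<lambda>z. u (fst z - \<epsilon>) (snd z)) differentiable (at (t, x))"
    proof -
      have "(\<lambda>z. u (fst z) (snd z)) differentiable (at ((\<lambda>z. (fst z - \<epsilon>, snd z)) (t, x)))"
        using NS_joint[OF ns, of "t - \<epsilon>" x] differentiableI by force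
      moreover have "(\<lambda>z::real\<times>vec3. (fst z - \<epsilon>, snd z)) differentiable (at (t, x))"
        by (rule differentiableI, auto intro!: derivative_eq_intros)
      ultimately show ?thesis using differentiable_compose[of "\<lambda>z. u (fst z) (snd z)"] by fastforce
    qed
    have vd: "vector_derivative (\<lambda>s. u (s - \<epsilon>) x) (at t) = vector_derivative (\<lambda>s. u s x) (at (t - \<epsilon>))"
    proof -
      have a: "((\<lambda>s. s - \<epsilon>) has_vector_derivative 1) (at t)"
        by (auto intro!: derivative_eq_intros)
      have "(((\<lambda>s. u s x) \<circ> (\<lambda>s. s - \<epsilon>)) has_vector_derivative (1 *\<^sub>R vector_derivative (\<lambda>s. u s x) (at (t - \<epsilon>)))) (at t)"
        by (rule vector_diff_chain_at[OF a]) (use NS_hvd[OF ns, of x "t - \<epsilon>"] in simp)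
      then show ?thesis using vector_derivative_at by (simp add: o_def)
    qed
    from ns[unfolded filtered_NS_def, rule_format, of "t - \<epsilon>" x]
    show "(\<lambda>z. u (fst z - \<epsilon>) (snd z)) differentiable (at (t, x)) \<and>
       (\<lambda>y. strain (\<lambda>t x. u (t - \<epsilon>) x) t y) differentiable (at x) \<and>
       (\<lambda>y. p (t - \<epsilon>) y) differentiable (at x) \<and>
       (\<lambda>y. \<tau> (strain (\<lambda>t x. u (t - \<epsilon>) x) t y) (vort (\<lambda>t x. u (t - \<epsilon>) x) t y)) differentiable (at x) \<and>
       vector_derivative (\<lambda>s. u (s - \<epsilon>) x) (at t) + div_tensor (\<lambda>y. outer (u (t - \<epsilon>) y) (u (t - \<epsilon>) y)) x +
       (1 / \<rho>) *\<^sub>R grad_scalar (p (t - \<epsilon>)) x - (2 * \<nu>) *\<^sub>R div_tensor (strain (\<lambda>t x. u (t - \<epsilon>) x) t) x +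
       div_tensor (\<lambda>y. \<tau> (strain (\<lambda>t x. u (t - \<epsilon>) x) t y) (vort (\<lambda>t x. u (t - \<epsilon>) x) t y)) x = 0 \<and>
       div_vec (u (t - \<epsilon>)) x = 0"
      using j vd S W by simp
  qed
qed

lemma Gp: "invariant_Gp \<nu> \<rho> \<tau>"
  unfolding invariant_Gp_def
proof (intro allI impI)
  fix \<xi> :: "real \<Rightarrow> real" and u p assume ns: "filtered_NS \<nu> \<rho> \<tau> u p"
  show "filtered_NS \<nu> \<rho> \<tau> u (\<lambda>t y. p t y + \<xi> t)"
    unfolding filtered_NS_def
    apply (intro allI)
    subgoal for t x
    proof -
    have d: "(\<lambda>y. p t y) differentiable (at x)" using ns unfolding filtered_NS_def by blast
    then obtain P where P: "((\<lambda>y. p t y) has_derivative P) (at x)" unfolding differentiable_def by blast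
    have P2: "((\<lambda>y. p t y + \<xi> t) has_derivative P) (at x)"
      using has_derivative_add_const[OF P] by simp
    have g: "grad_scalar (\<lambda>y. p t y + \<xi> t) x = grad_scalar (p t) x"
      using grad_scalar_hd[OF P2] grad_scalar_hd[OF P] by simp
    have d2: "(\<lambda>y. p t y + \<xi> t) differentiable (at x)" using d by simp
    from ns[unfolded filtered_NS_def, rule_format, of t x] show ?thesis
      using g d2 by (simp only: g)
  qed
  done
qed

lemma shift_hd: assumes "(F has_derivative F') (at (x - c))"
  shows "((\<lambda>y. F (y - c)) has_derivative F') (at x)"
proof -
  have h: "((\<lambda>y. y - c) has_derivative (\<lambda>h. h)) (at x)" by (auto intro!: derivative_eq_intros)
  show ?thesis using has_derivative_compose[OF h assms] by simp
qed

lemma shift_diff: "F differentiable (at (x - c)) \<Longrightarrow> (\<lambda>y. F (y - c)) differentiable (at x)"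
  unfolding differentiable_def using shift_hd by blast

lemma div_tensor_shift: "F differentiable (at (x - c)) \<Longrightarrow> div_tensor (\<lambda>y. F (y - c)) x = div_tensor F (x - c)"
proof -
  assume "F differentiable (at (x - c))"
  then obtain F' where F': "(F has_derivative F') (at (x - c))" unfolding differentiable_def by blast
  show ?thesis using div_tensor_hd[OF F'] div_tensor_hd[OF shift_hd[OF F']] by simp
qed

lemma fst_hd: fixes x :: "'b::real_normed_vector" and t :: "'a::real_normed_vector" assumes "(f has_derivative f') (at t)"
  shows "((\<lambda>z. f (fst z)) has_derivative (\<lambda>h. f' (fst h))) (at (t, x))"
proof -
  have h: "((\<lambda>z. fst z) has_derivative (\<lambda>z. fst z)) (at (t, x))"
    by (rule bounded_linear_imp_has_derivative[OF bounded_linear_fst])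
  show ?thesis using has_derivative_compose[OF h, of f f'] assms by simp
qed

lemma bilinear_outer: "bilinear outer"
  by (auto simp: bilinear_def outer_def vec_eq_iff algebra_simps intro!: linearI)

lemma bb_outer: "bounded_bilinear outer"
  using bilinear_outer bilinear_conv_bounded_bilinear by blast

lemma div_outer: assumes "(f has_derivative f') (at x)"
  shows "div_tensor (\<lambda>y. outer (f y) (f y)) x =
     (\<chi> i. \<Sum>j\<in>UNIV. f' (axis j 1) $ i * f x $ j + f x $ i * f' (axis j 1) $ j)"
proof -
  have "((\<lambda>y. outer (f y) (f y)) has_derivative (\<lambda>h. outer (f x) (f' h) + outer (f' h) (f x))) (at x)"
    using bounded_bilinear.FDERIV[OF bb_outer assms assms] .
  from div_tensor_hd[OF this] show ?thesis by (simp add: outer_def algebra_simps)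
qed

lemma linear_expand: assumes "linear (D :: vec3 \<Rightarrow> 'b::real_vector)"
  shows "D a = (\<Sum>j\<in>UNIV. a $ j *\<^sub>R D (axis j 1))"
proof -
  have "a = (\<Sum>j\<in>UNIV. a $ j *\<^sub>R axis j 1)"
    using basis_expansion[of a] by (simp add: scalar_mult_eq_scaleR)
  then have "D a = D (\<Sum>j\<in>UNIV. a $ j *\<^sub>R axis j 1)" by simp
  also have "\<dots> = (\<Sum>j\<in>UNIV. a $ j *\<^sub>R D (axis j 1))"
    by (simp add: linear_sum[OF assms] linear_cmul[OF assms])
  finally show ?thesis .
qed

lemma Gal: assumes rho: "\<rho> > 0" shows "invariant_Gal \<nu> \<rho> \<tau>"
  unfolding invariant_Gal_def
proof (intro allI impI)
  fix \<alpha> \<alpha>1 \<alpha>2 :: "real \<Rightarrow> vec3" and u p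
  assume C: "C2_curve \<alpha> \<alpha>1 \<alpha>2" and ns: "filtered_NS \<nu> \<rho> \<tau> u p"
  have h\<alpha>: "\<And>t. (\<alpha> has_derivative (\<lambda>h. h *\<^sub>R \<alpha>1 t)) (at t)"
    using C unfolding C2_curve_def has_vector_derivative_def by auto
  have h\<alpha>1: "\<And>t. (\<alpha>1 has_derivative (\<lambda>h. h *\<^sub>R \<alpha>2 t)) (at t)"
    using C unfolding C2_curve_def has_vector_derivative_def by auto
  define v where "v = (\<lambda>t y. u t (y - \<alpha> t) + \<alpha>1 t)"
  define q where "q = (\<lambda>t y. p t (y - \<alpha> t) - \<rho> * (\<alpha>2 t \<bullet> (y - \<alpha> t)))"
  have hu: "\<And>t y. (u t has_derivative (\<lambda>h. DU u t y (0, h))) (at y)"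
    using NS_space[OF ns] by blast
  have hv: "\<And>t y. (v t has_derivative (\<lambda>h. DU u t (y - \<alpha> t) (0, h))) (at y)"
  proof -
    fix t y
    have "((\<lambda>y. u t (y - \<alpha> t)) has_derivative (\<lambda>h. DU u t (y - \<alpha> t) (0, h))) (at y)"
      by (rule shift_hd) (rule hu)
    then show "(v t has_derivative (\<lambda>h. DU u t (y - \<alpha> t) (0, h))) (at y)"
      unfolding v_def by (rule has_derivative_add_const)
  qed
  have gr: "\<And>t y. gradu v t y = gradu u t (y - \<alpha> t)"
    using gradu_hd[OF hv] gradu_hd[OF hu] by simp
  have Sv: "\<And>t. strain v t = (\<lambda>y. strain u t (y - \<alpha> t))"
    by (simp add: strain_def gr fun_eq_iff)
  have Wv: "\<And>t. vort v t = (\<lambda>y. vort u t (y - \<alpha> t))"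
    by (simp add: vort_def gr fun_eq_iff)
  have "filtered_NS \<nu> \<rho> \<tau> v q"
    unfolding filtered_NS_def
    apply (intro allI)
    subgoal for t x
    proof -
      define z where "z = x - \<alpha> t"
      define a where "a = \<alpha>1 t"
      define D where "D = (\<lambda>h. DU u t z (0, h))"
      have nsz: "(\<lambda>y. strain u t y) differentiable (at z) \<and>
       (\<lambda>y. p t y) differentiable (at z) \<and>
       (\<lambda>y. \<tau> (strain u t y) (vort u t y)) differentiable (at z) \<and>
       vector_derivative (\<lambda>s. u s z) (at t)
         + div_tensor (\<lambda>y. outer (u t y) (u t y)) z
         + (1 / \<rho>) *\<^sub>R grad_scalar (p t) z
         - (2 * \<nu>) *\<^sub>R div_tensor (\<lambda>y. strain u t y) z
         + div_tensor (\<lambda>y. \<tau> (strain u t y) (vort u t y)) z = 0 \<and>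
       div_vec (u t) z = 0"
        using ns unfolding filtered_NS_def by blast
      have lD: "linear D" unfolding D_def using hu has_derivative_linear by blast
      have lDU: "linear (DU u t z)" using NS_joint[OF ns] has_derivative_linear by blast
      have hvx: "(v t has_derivative D) (at x)" using hv[of t x] unfolding D_def z_def .
      have huz: "(u t has_derivative D) (at z)" using hu[of t z] unfolding D_def .
      have joint: "(\<lambda>w. v (fst w) (snd w)) differentiable (at (t, x))"
      proof -
        have f\<alpha>: "((\<lambda>w. \<alpha> (fst w)) has_derivative (\<lambda>h. fst h *\<^sub>R \<alpha>1 t)) (at (t, x))"
          by (rule fst_hd[OF h\<alpha>])
        have f\<alpha>1: "((\<lambda>w. \<alpha>1 (fst w)) has_derivative (\<lambda>h. fst h *\<^sub>R \<alpha>2 t)) (at (t, x))"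
          by (rule fst_hd[OF h\<alpha>1])
        have m: "((\<lambda>w. (fst w, snd w - \<alpha> (fst w))) has_derivative (\<lambda>h. (fst h, snd h - fst h *\<^sub>R \<alpha>1 t))) (at (t, x))"
          by (intro has_derivative_Pair has_derivative_diff f\<alpha> bounded_linear_imp_has_derivative bounded_linear_fst bounded_linear_snd)
        have J: "((\<lambda>w. u (fst w) (snd w)) has_derivative DU u t z) (at ((\<lambda>w. (fst w, snd w - \<alpha> (fst w))) (t, x)))"
          using NS_joint[OF ns, of t z] by (simp add: z_def)
        have "((\<lambda>w. u (fst (fst w, snd w - \<alpha> (fst w))) (snd (fst w, snd w - \<alpha> (fst w))) + \<alpha>1 (fst w)) has_derivative
             (\<lambda>h. DU u t z (fst h, snd h - fst h *\<^sub>R \<alpha>1 t) + fst h *\<^sub>R \<alpha>2 t)) (at (t, x))"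
          by (rule has_derivative_add[OF has_derivative_compose[OF m J] f\<alpha>1])
        then show ?thesis unfolding v_def differentiable_def by auto
      qed
      have vd: "vector_derivative (\<lambda>s. v s x) (at t) = DU u t z (1, 0) - D a + \<alpha>2 t"
      proof -
        have n: "((\<lambda>s. (s, x - \<alpha> s)) has_derivative (\<lambda>h. (h, 0 - h *\<^sub>R \<alpha>1 t))) (at t)"
          by (intro has_derivative_Pair has_derivative_diff h\<alpha> has_derivative_ident has_derivative_const)
        have J: "((\<lambda>w. u (fst w) (snd w)) has_derivative DU u t z) (at ((\<lambda>s. (s, x - \<alpha> s)) t))"
          using NS_joint[OF ns, of t z] by (simp add: z_def)
        have "((\<lambda>s. u (fst (s, x - \<alpha> s)) (snd (s, x - \<alpha> s)) + \<alpha>1 s) has_derivative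
             (\<lambda>h. DU u t z (h, 0 - h *\<^sub>R \<alpha>1 t) + h *\<^sub>R \<alpha>2 t)) (at t)"
          by (rule has_derivative_add[OF has_derivative_compose[OF n J] h\<alpha>1])
        moreover have "(\<lambda>h. DU u t z (h, 0 - h *\<^sub>R \<alpha>1 t) + h *\<^sub>R \<alpha>2 t) = (\<lambda>h. h *\<^sub>R (DU u t z (1, - a) + \<alpha>2 t))"
        proof
          fix h :: real
          have e: "(h, 0 - h *\<^sub>R \<alpha>1 t) = h *\<^sub>R (1, - a)" by (simp add: a_def)
          show "DU u t z (h, 0 - h *\<^sub>R \<alpha>1 t) + h *\<^sub>R \<alpha>2 t = h *\<^sub>R (DU u t z (1, - a) + \<alpha>2 t)"
            unfolding e linear_cmul[OF lDU] by (simp add: scaleR_add_right)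
        qed
        ultimately have "((\<lambda>s. v s x) has_vector_derivative (DU u t z (1, - a) + \<alpha>2 t)) (at t)"
          unfolding has_vector_derivative_def v_def by simp
        then have "vector_derivative (\<lambda>s. v s x) (at t) = DU u t z (1, - a) + \<alpha>2 t"
          by (rule vector_derivative_at)
        moreover have "DU u t z (1, - a) = DU u t z (1, 0) - D a"
        proof -
          have "(1::real, - a) = (1, 0) - (0, a)" by simp
          then show ?thesis unfolding D_def by (simp only: linear_diff[OF lDU])
        qed
        ultimately show ?thesis by simp
      qed
      have vdu: "vector_derivative (\<lambda>s. u s z) (at t) = DU u t z (1, 0)"
        by (rule NS_vd[OF ns])
      have div0: "(\<Sum>j\<in>UNIV. D (axis j 1) $ j) = 0"
        using nsz div_vec_hd[OF huz] by simp
      have conv: "div_tensor (\<lambda>y. outer (v t y) (v t y)) x = div_tensor (\<lambda>y. outer (u t y) (u t y)) z + D a"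
      proof -
        have vx: "v t x = u t z + a" by (simp add: v_def z_def a_def)
        have Da: "\<And>i. D a $ i = (\<Sum>j\<in>UNIV. a $ j * D (axis j 1) $ i)"
          using linear_expand[OF lD, of a] by (simp add: sum_component)
        show ?thesis
          unfolding div_outer[OF hvx] div_outer[OF huz] vx
        proof (simp add: vec_eq_iff Da, intro allI)
          fix i
          have "(\<Sum>j\<in>UNIV. D (axis j 1) $ i * (u t z $ j + a $ j) + (u t z $ i + a $ i) * D (axis j 1) $ j)
            = (\<Sum>j\<in>UNIV. D (axis j 1) $ i * u t z $ j + u t z $ i * D (axis j 1) $ j)
              + (\<Sum>j\<in>UNIV. a $ j * D (axis j 1) $ i) + a $ i * (\<Sum>j\<in>UNIV. D (axis j 1) $ j)"
            by (simp add: algebra_simps sum.distrib sum_distrib_left)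
          then show "(\<Sum>j\<in>UNIV. D (axis j 1) $ i * (u t z $ j + a $ j) + (u t z $ i + a $ i) * D (axis j 1) $ j)
            = (\<Sum>j\<in>UNIV. D (axis j 1) $ i * u t z $ j + u t z $ i * D (axis j 1) $ j)
              + (\<Sum>j\<in>UNIV. a $ j * D (axis j 1) $ i)"
            using div0 by simp
        qed
      qed
      obtain P where P: "(p t has_derivative P) (at z)"
        using nsz unfolding differentiable_def by auto
      have hq: "(q t has_derivative (\<lambda>h. P h - \<rho> * (\<alpha>2 t \<bullet> h))) (at x)"
      proof -
        have "((\<lambda>y. p t (y - \<alpha> t)) has_derivative P) (at x)"
          by (rule shift_hd) (use P z_def in simp)
        then show ?thesis unfolding q_def
          by (auto intro!: derivative_eq_intros)
      qed
      have gq: "grad_scalar (q t) x = grad_scalar (p t) z - \<rho> *\<^sub>R \<alpha>2 t"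
        unfolding grad_scalar_hd[OF hq] grad_scalar_hd[OF P]
        by (simp add: vec_eq_iff inner_axis)
      have Sd: "(\<lambda>y. strain v t y) differentiable (at x)"
        unfolding Sv using shift_diff[of "strain u t" x "\<alpha> t"] nsz z_def by simp
      have Sdiv: "div_tensor (\<lambda>y. strain v t y) x = div_tensor (\<lambda>y. strain u t y) z"
        unfolding Sv using div_tensor_shift[of "strain u t" x "\<alpha> t"] nsz z_def by simp
      have Tf: "(\<lambda>y. \<tau> (strain v t y) (vort v t y)) = (\<lambda>y. (\<lambda>y. \<tau> (strain u t y) (vort u t y)) (y - \<alpha> t))"
        by (simp add: Sv Wv)
      have Td: "(\<lambda>y. \<tau> (strain v t y) (vort v t y)) differentiable (at x)"
        unfolding Tf using shift_diff[of "\<lambda>y. \<tau> (strain u t y) (vort u t y)" x "\<alpha> t"] nsz z_def by simp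
      have Tdiv: "div_tensor (\<lambda>y. \<tau> (strain v t y) (vort v t y)) x = div_tensor (\<lambda>y. \<tau> (strain u t y) (vort u t y)) z"
        unfolding Tf using div_tensor_shift[of "\<lambda>y. \<tau> (strain u t y) (vort u t y)" x "\<alpha> t"] nsz z_def by simp
      have qd: "(\<lambda>y. q t y) differentiable (at x)"
        using hq unfolding differentiable_def by auto
      have dv: "div_vec (v t) x = 0"
        using div_vec_hd[OF hvx] div_vec_hd[OF huz] nsz by simp
      have eq: "vector_derivative (\<lambda>s. v s x) (at t)
         + div_tensor (\<lambda>y. outer (v t y) (v t y)) x
         + (1 / \<rho>) *\<^sub>R grad_scalar (q t) x
         - (2 * \<nu>) *\<^sub>R div_tensor (\<lambda>y. strain v t y) x
         + div_tensor (\<lambda>y. \<tau> (strain v t y) (vort v t y)) x = 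
         vector_derivative (\<lambda>s. u s z) (at t)
         + div_tensor (\<lambda>y. outer (u t y) (u t y)) z
         + (1 / \<rho>) *\<^sub>R grad_scalar (p t) z
         - (2 * \<nu>) *\<^sub>R div_tensor (\<lambda>y. strain u t y) z
         + div_tensor (\<lambda>y. \<tau> (strain u t y) (vort u t y)) z"
        unfolding vd vdu conv gq Sdiv Tdiv using rho
        by (simp add: algebra_simps)
      show ?thesis using joint Sd qd Td eq nsz dv by simp
    qed
    done
  then show "filtered_NS \<nu> \<rho> \<tau> (\<lambda>t y. u t (y - \<alpha> t) + \<alpha>1 t)
     (\<lambda>t y. p t (y - \<alpha> t) - \<rho> * (\<alpha>2 t \<bullet> (y - \<alpha> t)))"
    unfolding v_def q_def .
qed

lemma orth_sum: assumes "transpose R ** R = (mat 1 :: mat3)"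
  shows "(\<Sum>j\<in>UNIV. R$j$m * R$j$l) = (if m = l then 1 else 0)"
proof -
  have "(transpose R ** R) $ m $ l = (\<Sum>j\<in>UNIV. R$j$m * R$j$l)"
    by (simp add: matrix_matrix_mult_def transpose_def)
  then show ?thesis using assms by (simp add: mat_def)
qed

lemma swap4: "(\<Sum>j\<in>UNIV. \<Sum>k\<in>UNIV. \<Sum>l\<in>UNIV. \<Sum>m\<in>UNIV. (f j k l m :: real))
   = (\<Sum>k\<in>UNIV. \<Sum>l\<in>UNIV. \<Sum>m\<in>UNIV. \<Sum>j\<in>UNIV. f j k l m)"
proof -
  have "(\<Sum>j\<in>UNIV. \<Sum>k\<in>UNIV. \<Sum>l\<in>UNIV. \<Sum>m\<in>UNIV. f j k l m)
     = (\<Sum>k\<in>UNIV. \<Sum>j\<in>UNIV. \<Sum>l\<in>UNIV. \<Sum>m\<in>UNIV. f j k l m)" by (rule sum.swap)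
  also have "\<dots> = (\<Sum>k\<in>UNIV. \<Sum>l\<in>UNIV. \<Sum>j\<in>UNIV. \<Sum>m\<in>UNIV. f j k l m)"
    by (rule sum.cong[OF refl], rule sum.swap)
  also have "\<dots> = (\<Sum>k\<in>UNIV. \<Sum>l\<in>UNIV. \<Sum>m\<in>UNIV. \<Sum>j\<in>UNIV. f j k l m)"
    by (rule sum.cong[OF refl], rule sum.cong[OF refl], rule sum.swap)
  finally show ?thesis .
qed

lemma div_rot:
  fixes F' :: "vec3 \<Rightarrow> mat3"
  assumes lF: "linear F'" and RR: "transpose R ** R = (mat 1 :: mat3)"
  shows "(\<chi> i. \<Sum>j\<in>UNIV. (R ** F' (transpose R *v axis j 1) ** transpose R) $ i $ j)
       = R *v (\<chi> k. \<Sum>m\<in>UNIV. F' (axis m 1) $ k $ m)"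
proof -
  have e1: "\<And>M i j. (R ** M ** transpose R) $ i $ j = (\<Sum>k\<in>UNIV. \<Sum>l\<in>UNIV. R$i$k * M$k$l * R$j$l)"
    by (simp add: matrix_matrix_mult_def transpose_def sum_distrib_right) (rule sum.swap)
  have e2: "\<And>j k l. F' (transpose R *v axis j 1) $ k $ l = (\<Sum>m\<in>UNIV. R$j$m * F' (axis m 1) $ k $ l)"
  proof -
    fix j k l
    have "(transpose R *v axis j 1) $ m = R$j$m" for m
      by (simp add: matrix_vector_mult_basis column_def transpose_def)
    then show "F' (transpose R *v axis j 1) $ k $ l = (\<Sum>m\<in>UNIV. R$j$m * F' (axis m 1) $ k $ l)"
      using linear_expand[OF lF, of "transpose R *v axis j 1"] by (simp add: sum_component)
  qed
  show ?thesis
  proof (rule iffD2[OF vec_eq_iff], intro allI)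
    fix i
    have "(\<chi> i. \<Sum>j\<in>UNIV. (R ** F' (transpose R *v axis j 1) ** transpose R) $ i $ j) $ i
        = (\<Sum>j\<in>UNIV. (R ** F' (transpose R *v axis j 1) ** transpose R) $ i $ j)" by (rule vec_lambda_beta)
    also have "\<dots> = (\<Sum>j\<in>UNIV. \<Sum>k\<in>UNIV. \<Sum>l\<in>UNIV. \<Sum>m\<in>UNIV. R$i$k * F' (axis m 1) $ k $ l * (R$j$m * R$j$l))"
      unfolding e1 e2 by (simp only: sum_distrib_left sum_distrib_right mult_ac)
    also have "\<dots> = (\<Sum>k\<in>UNIV. \<Sum>l\<in>UNIV. \<Sum>m\<in>UNIV. R$i$k * F' (axis m 1) $ k $ l * (\<Sum>j\<in>UNIV. R$j$m * R$j$l))"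
      by (subst swap4) (simp only: sum_distrib_left)
    also have "\<dots> = (\<Sum>k\<in>UNIV. \<Sum>l\<in>UNIV. R$i$k * F' (axis l 1) $ k $ l)"
      unfolding orth_sum[OF RR] by (simp add: if_distrib cong: if_cong)
    also have "\<dots> = (R *v (\<chi> k. \<Sum>m\<in>UNIV. F' (axis m 1) $ k $ m)) $ i"
      by (simp add: matrix_vector_mult_def sum_distrib_left)
    finally show "(\<chi> i. \<Sum>j\<in>UNIV. (R ** F' (transpose R *v axis j 1) ** transpose R) $ i $ j) $ i
        = (R *v (\<chi> k. \<Sum>m\<in>UNIV. F' (axis m 1) $ k $ m)) $ i" .
  qed
qed


lemma mat_add_rdistrib: "(A + B) ** C = A ** C + B ** (C::mat3)"
  by (simp add: matrix_matrix_mult_def vec_eq_iff sum.distrib distrib_right)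

lemma cj_add: "(R::mat3) ** (A + B) ** C = R ** A ** C + R ** B ** (C::mat3)"
  by (simp add: matrix_add_ldistrib mat_add_rdistrib)

lemma mat_scaleR_left: "(c *\<^sub>R A) ** B = c *\<^sub>R (A ** (B::mat3))"
  by (simp add: matrix_matrix_mult_def vec_eq_iff sum_distrib_left mult.assoc)

lemma mat_scaleR_right: "A ** (c *\<^sub>R B) = c *\<^sub>R (A ** (B::mat3))"
  by (simp add: matrix_matrix_mult_def vec_eq_iff sum_distrib_left mult.left_commute)

lemma mat_diff_left: "(A - B) ** C = A ** C - B ** (C::mat3)"
  by (simp add: matrix_matrix_mult_def vec_eq_iff sum_subtractf left_diff_distrib)

lemma mat_diff_right: "A ** (B - C) = A ** B - A ** (C::mat3)"
  by (simp add: matrix_matrix_mult_def vec_eq_iff sum_subtractf right_diff_distrib)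

lemma cj_scale: "(R::mat3) ** (c *\<^sub>R A) ** C = c *\<^sub>R (R ** A ** (C::mat3))"
  by (simp only: mat_scaleR_left mat_scaleR_right)

lemma linear_cj: "linear (\<lambda>M::mat3. (R::mat3) ** M ** (C::mat3))"
  by (rule linearI) (simp_all add: cj_add cj_scale)

lemma bl_cj: "bounded_linear (\<lambda>M::mat3. (R::mat3) ** M ** (C::mat3))"
  using linear_cj linear_conv_bounded_linear by blast

lemma matrix_conj: assumes "linear (D :: vec3 \<Rightarrow> vec3)"
  shows "matrix (\<lambda>h. R *v D (C *v h)) = R ** matrix D ** C"
proof -
  have "(\<lambda>h. R *v D (C *v h)) = (\<lambda>h. (R ** matrix D ** C) *v h)"
    using matrix_vector_mul(2)[OF assms] by (metis matrix_vector_mul_assoc)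
  then show ?thesis by simp
qed

lemma outer_rot: "outer ((R::mat3) *v a) (R *v a) = R ** outer a a ** transpose R"
  by (simp add: outer_def matrix_matrix_mult_def matrix_vector_mult_def transpose_def vec_eq_iff
      sum_distrib_left sum_distrib_right mult_ac)

lemma RRt: fixes R :: mat3 assumes "transpose R ** R = (mat 1 :: mat3)" shows "R ** transpose R = mat 1"
proof -
  have "orthogonal_matrix R" by (simp add: orthogonal_matrix assms)
  then show ?thesis by (simp add: orthogonal_matrix_def)
qed

lemma trace_cj: fixes R :: mat3 assumes "transpose R ** R = (mat 1 :: mat3)"
  shows "trace (R ** A ** transpose R) = trace A"
proof -
  have "trace (R ** A ** transpose R) = trace (transpose R ** (R ** A))" by (rule trace_mul_sym)
  also have "\<dots> = trace A" by (simp add: matrix_mul_assoc assms)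
  finally show ?thesis .
qed

lemma mul_cj: fixes R :: mat3 assumes "transpose R ** R = (mat 1 :: mat3)"
  shows "(R ** A ** transpose R) ** (R ** B ** transpose R) = R ** (A ** B) ** transpose R"
proof -
  have "(R ** A ** transpose R) ** (R ** B ** transpose R) = R ** A ** (transpose R ** R) ** B ** transpose R"
    by (simp add: matrix_mul_assoc)
  then show ?thesis by (simp add: assms matrix_mul_assoc)
qed

lemma dev_cj: fixes R :: mat3 assumes "transpose R ** R = (mat 1 :: mat3)"
  shows "dev (R ** A ** transpose R) = R ** dev A ** transpose R"
  unfolding dev_def trace_cj[OF assms] using RRt[OF assms]
  by (simp add: mat_diff_left mat_diff_right cj_scale)

lemma model_cj: fixes R :: mat3 assumes "transpose R ** R = (mat 1 :: mat3)"
  shows "model g g' (R ** S ** transpose R) (R ** W ** transpose R) = R ** model g g' S W ** transpose R"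
proof -
  have ms: "mnorm (R ** S ** transpose R) = mnorm S"
    unfolding mnorm_def mul_cj[OF assms] trace_cj[OF assms] ..
  have iv: "invs (R ** S ** transpose R) (R ** W ** transpose R) = invs S W"
    unfolding invs_def ms mul_cj[OF assms] trace_cj[OF assms] ..
  show ?thesis
    unfolding model_def Let_def iv ms mul_cj[OF assms] dev_cj[OF assms]
    by (simp only: cj_add cj_scale)
qed

lemma hd_Rt: "((\<lambda>y. (C::mat3) *v y) has_derivative (\<lambda>h. C *v h)) (at x)"
  by (rule bounded_linear_imp_has_derivative[OF matrix_vector_mul_bounded_linear])

lemma rot_tensor_hd: fixes R :: mat3
  assumes "(F has_derivative F') (at (transpose R *v x))"
  shows "((\<lambda>y. R ** F (transpose R *v y) ** transpose R) has_derivative (\<lambda>h. R ** F' (transpose R *v h) ** transpose R)) (at x)"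
proof -
  have "((\<lambda>y. F (transpose R *v y)) has_derivative (\<lambda>h. F' (transpose R *v h))) (at x)"
    using has_derivative_compose[OF hd_Rt assms] by simp
  from bounded_linear.has_derivative[OF bl_cj this] show ?thesis .
qed

lemma rot_tensor_div: fixes R :: mat3
  assumes "F differentiable (at (transpose R *v x))" and RR: "transpose R ** R = mat 1"
  shows "(\<lambda>y. R ** F (transpose R *v y) ** transpose R) differentiable (at x)"
    "div_tensor (\<lambda>y. R ** F (transpose R *v y) ** transpose R) x = R *v div_tensor F (transpose R *v x)"
proof -
  obtain F' where F': "(F has_derivative F') (at (transpose R *v x))"
    using assms unfolding differentiable_def by blast
  show "(\<lambda>y. R ** F (transpose R *v y) ** transpose R) differentiable (at x)"
    using rot_tensor_hd[OF F'] unfolding differentiable_def by blast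
  have lF: "linear F'" using F' has_derivative_linear by blast
  show "div_tensor (\<lambda>y. R ** F (transpose R *v y) ** transpose R) x = R *v div_tensor F (transpose R *v x)"
    unfolding div_tensor_hd[OF rot_tensor_hd[OF F']] div_tensor_hd[OF F'] by (rule div_rot[OF lF RR])
qed

lemma rot_vec_hd: fixes R :: mat3
  assumes "(f has_derivative f') (at (transpose R *v x))"
  shows "((\<lambda>y. R *v f (transpose R *v y)) has_derivative (\<lambda>h. R *v f' (transpose R *v h))) (at x)"
proof -
  have "((\<lambda>y. f (transpose R *v y)) has_derivative (\<lambda>h. f' (transpose R *v h))) (at x)"
    using has_derivative_compose[OF hd_Rt assms] by simp
  from bounded_linear.has_derivative[OF matrix_vector_mul_bounded_linear this] show ?thesis .
qed

lemma swap3: "(\<Sum>j\<in>UNIV. \<Sum>k\<in>UNIV. \<Sum>m\<in>UNIV. (f j k m :: real))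
   = (\<Sum>k\<in>UNIV. \<Sum>m\<in>UNIV. \<Sum>j\<in>UNIV. f j k m)"
proof -
  have "(\<Sum>j\<in>UNIV. \<Sum>k\<in>UNIV. \<Sum>m\<in>UNIV. f j k m)
     = (\<Sum>k\<in>UNIV. \<Sum>j\<in>UNIV. \<Sum>m\<in>UNIV. f j k m)" by (rule sum.swap)
  also have "\<dots> = (\<Sum>k\<in>UNIV. \<Sum>m\<in>UNIV. \<Sum>j\<in>UNIV. f j k m)"
    by (rule sum.cong[OF refl], rule sum.swap)
  finally show ?thesis .
qed

lemma div_vec_rot_sum:
  fixes f' :: "vec3 \<Rightarrow> vec3" and R :: mat3
  assumes lf: "linear f'" and RR: "transpose R ** R = mat 1"
  shows "(\<Sum>j\<in>UNIV. (R *v f' (transpose R *v axis j 1)) $ j) = (\<Sum>k\<in>UNIV. f' (axis k 1) $ k)"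
proof -
  have e2: "\<And>j k. f' (transpose R *v axis j 1) $ k = (\<Sum>m\<in>UNIV. R$j$m * f' (axis m 1) $ k)"
  proof -
    fix j k
    have "(transpose R *v axis j 1) $ m = R$j$m" for m
      by (simp add: matrix_vector_mult_basis column_def transpose_def)
    then show "f' (transpose R *v axis j 1) $ k = (\<Sum>m\<in>UNIV. R$j$m * f' (axis m 1) $ k)"
      using linear_expand[OF lf, of "transpose R *v axis j 1"] by (simp add: sum_component)
  qed
  have e1: "\<And>w j. (R *v w) $ j = (\<Sum>k\<in>UNIV. R$j$k * w$k)"
    by (simp add: matrix_vector_mult_def)
  have "(\<Sum>j\<in>UNIV. (R *v f' (transpose R *v axis j 1)) $ j)
      = (\<Sum>j\<in>UNIV. \<Sum>k\<in>UNIV. \<Sum>m\<in>UNIV. f' (axis m 1) $ k * (R$j$k * R$j$m))"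
    unfolding e1 e2 by (simp only: sum_distrib_left sum_distrib_right mult_ac)
  also have "\<dots> = (\<Sum>k\<in>UNIV. \<Sum>m\<in>UNIV. f' (axis m 1) $ k * (\<Sum>j\<in>UNIV. R$j$k * R$j$m))"
    by (subst swap3) (simp only: sum_distrib_left)
  also have "\<dots> = (\<Sum>k\<in>UNIV. f' (axis k 1) $ k)"
    unfolding orth_sum[OF RR] by (simp add: if_distrib cong: if_cong)
  finally show ?thesis .
qed

lemma rot_div_vec: fixes R :: mat3
  assumes "(f has_derivative f') (at (transpose R *v x))" and RR: "transpose R ** R = mat 1"
  shows "div_vec (\<lambda>y. R *v f (transpose R *v y)) x = div_vec f (transpose R *v x)"
proof -
  have lf: "linear f'" using assms has_derivative_linear by blast
  show ?thesis unfolding div_vec_hd[OF rot_vec_hd[OF assms(1)]] div_vec_hd[OF assms(1)]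
    by (rule div_vec_rot_sum[OF lf RR])
qed

lemma rot_grad: fixes R :: mat3
  assumes P: "(P has_derivative P') (at (transpose R *v x))"
  shows "((\<lambda>y. P (transpose R *v y)) has_derivative (\<lambda>h. P' (transpose R *v h))) (at x)"
    "grad_scalar (\<lambda>y. P (transpose R *v y)) x = R *v grad_scalar P (transpose R *v x)"
proof -
  show h: "((\<lambda>y. P (transpose R *v y)) has_derivative (\<lambda>h. P' (transpose R *v h))) (at x)"
    using has_derivative_compose[OF hd_Rt P] by simp
  have lP: "linear P'" using P has_derivative_linear by blast
  have c: "(transpose R *v axis j 1) $ m = R$j$m" for j m
    by (simp add: matrix_vector_mult_basis column_def transpose_def)
  show "grad_scalar (\<lambda>y. P (transpose R *v y)) x = R *v grad_scalar P (transpose R *v x)"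
    unfolding grad_scalar_hd[OF h] grad_scalar_hd[OF P]
  proof (rule iffD2[OF vec_eq_iff], intro allI)
    fix i
    have "P' (transpose R *v axis i 1) = (\<Sum>m\<in>UNIV. R$i$m * P' (axis m 1))"
      using linear_expand[OF lP, of "transpose R *v axis i 1"] by (simp only: c real_scaleR_def)
    then show "(\<chi> j. P' (transpose R *v axis j 1)) $ i = (R *v (\<chi> j. P' (axis j 1))) $ i"
      by (simp add: matrix_vector_mult_def)
  qed
qed

lemma cj_diff: "(R::mat3) ** (A - B) ** C = R ** A ** C - R ** B ** (C::mat3)"
  by (simp add: mat_diff_left mat_diff_right)

lemma transpose_cj: "transpose ((R::mat3) ** J ** transpose R) = R ** transpose J ** transpose R"
  by (simp add: matrix_transpose_mul matrix_mul_assoc)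

lemma SO3inv: "invariant_SO3 \<nu> \<rho> (model g g')"
  unfolding invariant_SO3_def
proof (intro ballI allI impI)
  fix R u p assume RS: "R \<in> SO3" and ns: "filtered_NS \<nu> \<rho> (model g g') u p"
  have RR: "transpose R ** R = mat 1" using RS unfolding SO3_def by blast
  define v where "v = (\<lambda>t y. R *v u t (transpose R *v y))"
  define q where "q = (\<lambda>t y. p t (transpose R *v y))"
  have hu: "\<And>t y. (u t has_derivative (\<lambda>h. DU u t y (0, h))) (at y)"
    using NS_space[OF ns] by blast
  have hv: "\<And>t y. (v t has_derivative (\<lambda>h. R *v DU u t (transpose R *v y) (0, transpose R *v h))) (at y)"
    unfolding v_def by (rule rot_vec_hd) (rule hu)
  have gr: "\<And>t y. gradu v t y = R ** gradu u t (transpose R *v y) ** transpose R"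
  proof -
    fix t y
    have l: "linear (\<lambda>h. DU u t (transpose R *v y) (0, h))" using hu has_derivative_linear by blast
    show "gradu v t y = R ** gradu u t (transpose R *v y) ** transpose R"
      unfolding gradu_hd[OF hv] gradu_hd[OF hu] by (rule matrix_conj[OF l])
  qed
  have Sv: "\<And>t y. strain v t y = R ** strain u t (transpose R *v y) ** transpose R"
    unfolding strain_def gr transpose_cj cj_add[symmetric] cj_scale ..
  have Wv: "\<And>t y. vort v t y = R ** vort u t (transpose R *v y) ** transpose R"
    unfolding vort_def gr transpose_cj cj_diff[symmetric] cj_scale ..
  have Tv: "\<And>t y. model g g' (strain v t y) (vort v t y)
      = R ** model g g' (strain u t (transpose R *v y)) (vort u t (transpose R *v y)) ** transpose R"
    unfolding Sv Wv model_cj[OF RR] ..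
  have "filtered_NS \<nu> \<rho> (model g g') v q"
    unfolding filtered_NS_def
    apply (intro allI)
    subgoal for t x
    proof -
      define z where "z = transpose R *v x"
      have nsz: "(\<lambda>y. strain u t y) differentiable (at z) \<and>
       (\<lambda>y. p t y) differentiable (at z) \<and>
       (\<lambda>y. model g g' (strain u t y) (vort u t y)) differentiable (at z) \<and>
       vector_derivative (\<lambda>s. u s z) (at t)
         + div_tensor (\<lambda>y. outer (u t y) (u t y)) z
         + (1 / \<rho>) *\<^sub>R grad_scalar (p t) z
         - (2 * \<nu>) *\<^sub>R div_tensor (\<lambda>y. strain u t y) z
         + div_tensor (\<lambda>y. model g g' (strain u t y) (vort u t y)) z = 0 \<and>
       div_vec (u t) z = 0"
        using ns unfolding filtered_NS_def by blast
      have joint: "(\<lambda>w. v (fst w) (snd w)) differentiable (at (t, x))"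
      proof -
        have m: "((\<lambda>w. (fst w, transpose R *v snd w)) has_derivative (\<lambda>h. (fst h, transpose R *v snd h))) (at (t, x))"
          by (intro has_derivative_Pair bounded_linear_imp_has_derivative bounded_linear_fst
              bounded_linear_compose[OF matrix_vector_mul_bounded_linear bounded_linear_snd])
        have J: "((\<lambda>w. u (fst w) (snd w)) has_derivative DU u t z) (at ((\<lambda>w. (fst w, transpose R *v snd w)) (t, x)))"
          using NS_joint[OF ns, of t z] by (simp add: z_def)
        have "((\<lambda>w. R *v u (fst (fst w, transpose R *v snd w)) (snd (fst w, transpose R *v snd w))) has_derivative
             (\<lambda>h. R *v DU u t z (fst h, transpose R *v snd h))) (at (t, x))"
          by (rule bounded_linear.has_derivative[OF matrix_vector_mul_bounded_linear has_derivative_compose[OF m J]])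
        then show ?thesis unfolding v_def differentiable_def by auto
      qed
      have vd: "vector_derivative (\<lambda>s. v s x) (at t) = R *v vector_derivative (\<lambda>s. u s z) (at t)"
      proof -
        have "((\<lambda>s. u s z) has_derivative (\<lambda>h. h *\<^sub>R vector_derivative (\<lambda>s. u s z) (at t))) (at t)"
          using NS_hvd[OF ns, of z t] unfolding has_vector_derivative_def .
        from bounded_linear.has_derivative[OF matrix_vector_mul_bounded_linear this, of R]
        have "((\<lambda>s. v s x) has_vector_derivative R *v vector_derivative (\<lambda>s. u s z) (at t)) (at t)"
          unfolding has_vector_derivative_def v_def z_def by (simp add: matrix_vector_mult_scaleR)
        then show ?thesis by (rule vector_derivative_at)
      qed
      have od: "(\<lambda>y. outer (u t y) (u t y)) differentiable (at z)"
        using bounded_bilinear.FDERIV[OF bb_outer hu[of t z] hu[of t z]] unfolding differentiable_def by blast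
      have Of: "(\<lambda>y. outer (v t y) (v t y)) = (\<lambda>y. R ** (\<lambda>y. outer (u t y) (u t y)) (transpose R *v y) ** transpose R)"
        unfolding v_def outer_rot by simp
      have conv: "div_tensor (\<lambda>y. outer (v t y) (v t y)) x = R *v div_tensor (\<lambda>y. outer (u t y) (u t y)) z"
        unfolding Of z_def by (rule rot_tensor_div(2)[OF od[unfolded z_def] RR])
      obtain P where P: "(p t has_derivative P) (at (transpose R *v x))"
        using nsz unfolding differentiable_def z_def by auto
      have qd: "(\<lambda>y. q t y) differentiable (at x)"
        using rot_grad(1)[OF P] unfolding q_def differentiable_def by blast
      have gq: "grad_scalar (q t) x = R *v grad_scalar (p t) z"
        unfolding q_def z_def using rot_grad(2)[OF P] by simp
      have Sf: "(\<lambda>y. strain v t y) = (\<lambda>y. R ** strain u t (transpose R *v y) ** transpose R)"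
        using Sv by blast
      have Sd: "(\<lambda>y. strain v t y) differentiable (at x)"
        unfolding Sf by (rule rot_tensor_div(1)) (use nsz z_def RR in auto)
      have Sdiv: "div_tensor (\<lambda>y. strain v t y) x = R *v div_tensor (\<lambda>y. strain u t y) z"
        unfolding Sf z_def by (rule rot_tensor_div(2)) (use nsz z_def RR in auto)
      have Tf: "(\<lambda>y. model g g' (strain v t y) (vort v t y))
          = (\<lambda>y. R ** (\<lambda>y. model g g' (strain u t y) (vort u t y)) (transpose R *v y) ** transpose R)"
        using Tv by simp
      have Td: "(\<lambda>y. model g g' (strain v t y) (vort v t y)) differentiable (at x)"
        unfolding Tf by (rule rot_tensor_div(1)) (use nsz z_def RR in auto)
      have Tdiv: "div_tensor (\<lambda>y. model g g' (strain v t y) (vort v t y)) x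
          = R *v div_tensor (\<lambda>y. model g g' (strain u t y) (vort u t y)) z"
        unfolding Tf z_def by (rule rot_tensor_div(2)) (use nsz z_def RR in auto)
      have dv: "div_vec (v t) x = 0"
      proof -
        have "div_vec (v t) x = div_vec (u t) z"
          unfolding v_def z_def by (rule rot_div_vec[OF hu RR])
        then show ?thesis using nsz by simp
      qed
      have eq: "vector_derivative (\<lambda>s. v s x) (at t)
         + div_tensor (\<lambda>y. outer (v t y) (v t y)) x
         + (1 / \<rho>) *\<^sub>R grad_scalar (q t) x
         - (2 * \<nu>) *\<^sub>R div_tensor (\<lambda>y. strain v t y) x
         + div_tensor (\<lambda>y. model g g' (strain v t y) (vort v t y)) x = 
         R *v (vector_derivative (\<lambda>s. u s z) (at t)
         + div_tensor (\<lambda>y. outer (u t y) (u t y)) z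
         + (1 / \<rho>) *\<^sub>R grad_scalar (p t) z
         - (2 * \<nu>) *\<^sub>R div_tensor (\<lambda>y. strain u t y) z
         + div_tensor (\<lambda>y. model g g' (strain u t y) (vort u t y)) z)"
        unfolding vd conv gq Sdiv Tdiv
        by (simp add: matrix_vector_right_distrib matrix_vector_mult_diff_distrib matrix_vector_mult_scaleR)
      show ?thesis using joint Sd qd Td eq nsz dv by simp
    qed
    done
  then show "filtered_NS \<nu> \<rho> (model g g') (\<lambda>t y. R *v u t (transpose R *v y)) (\<lambda>t y. p t (transpose R *v y))"
    unfolding v_def q_def .
qed

lemma bilinear_mm: "bilinear (\<lambda>A B::mat3. A ** B)"
  by (auto simp: bilinear_def intro!: linearI simp: matrix_add_ldistrib mat_add_rdistrib mat_scaleR_left mat_scaleR_right)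

lemma bb_mm: "bounded_bilinear (\<lambda>A B::mat3. A ** B)"
  using bilinear_mm bilinear_conv_bounded_bilinear by blast

lemma trace_scaleR: "trace (c *\<^sub>R (A::mat3)) = c * trace A"
  by (simp add: trace_def sum_distrib_left)

lemma linear_trace: "linear (trace :: mat3 \<Rightarrow> real)"
  by (rule linearI) (simp_all add: trace_add trace_scaleR)

lemma bl_trace: "bounded_linear (trace :: mat3 \<Rightarrow> real)"
  using linear_trace linear_conv_bounded_linear by blast

lemma hd_sq: "((\<lambda>X::mat3. X ** X) has_derivative (\<lambda>H. X0 ** H + H ** X0)) (at X0)"
  using bounded_bilinear.FDERIV[OF bb_mm has_derivative_ident has_derivative_ident] by simp

lemma hd_cube: "((\<lambda>X::mat3. X ** X ** X) has_derivative (\<lambda>H. (X0 ** X0) ** H + (X0 ** H + H ** X0) ** X0)) (at X0)"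
  using bounded_bilinear.FDERIV[OF bb_mm hd_sq has_derivative_ident] by simp

lemma hN2: "((\<lambda>X::mat3. trace (X ** X)) has_derivative (\<lambda>H. 2 * trace (S ** H))) (at S)"
proof (rule has_derivative_eq_rhs[OF bounded_linear.has_derivative[OF bl_trace hd_sq]])
  show "(\<lambda>H. trace (S ** H + H ** S)) = (\<lambda>H. 2 * trace (S ** H))"
    by (rule ext) (simp add: trace_add trace_mul_sym[of _ S])
qed

lemma hT3: "((\<lambda>X::mat3. trace (X ** X ** X)) has_derivative (\<lambda>H. 3 * trace (S ** S ** H))) (at S)"
proof (rule has_derivative_eq_rhs[OF bounded_linear.has_derivative[OF bl_trace hd_cube]])
  show "(\<lambda>H. trace (S ** S ** H + (S ** H + H ** S) ** S)) = (\<lambda>H. 3 * trace (S ** S ** H))"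
  proof
    fix H
    have 1: "trace (S ** H ** S) = trace (S ** S ** H)"
      using trace_mul_sym[of "S ** H" S] by (simp add: matrix_mul_assoc)
    have 2: "trace (H ** S ** S) = trace (S ** S ** H)"
      using trace_mul_sym[of H "S ** S"] by (simp add: matrix_mul_assoc)
    show "trace (S ** S ** H + (S ** H + H ** S) ** S) = 3 * trace (S ** S ** H)"
      by (simp add: trace_add mat_add_rdistrib 1 2)
  qed
qed

lemma hT4: "((\<lambda>X::mat3. trace (X ** W ** W)) has_derivative (\<lambda>H. trace (W ** W ** H))) (at S)"
proof -
  have bl: "bounded_linear (\<lambda>X::mat3. trace (X ** W ** W))"
  proof -
    have "linear (\<lambda>X::mat3. trace (X ** W ** W))"
      by (rule linearI) (simp_all add: mat_add_rdistrib mat_scaleR_left trace_add trace_scaleR)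
    then show ?thesis using linear_conv_bounded_linear by blast
  qed
  have "(\<lambda>H. trace (H ** W ** W)) = (\<lambda>H. trace (W ** W ** H))"
    using trace_mul_sym[of _ "W ** W"] by (simp add: matrix_mul_assoc)
  then show ?thesis using bounded_linear_imp_has_derivative[OF bl] by simp
qed

lemma hN: assumes pos: "trace (S ** S) > 0"
  shows "(mnorm has_derivative (\<lambda>H. trace (S ** H) / mnorm S)) (at S)"
proof -
  have "((\<lambda>X. sqrt (trace (X ** X))) has_derivative (\<lambda>H. 2 * trace (S ** H) * (inverse (sqrt (trace (S ** S))) / 2))) (at S)"
    by (rule has_derivative_real_sqrt[OF pos hN2])
  then show ?thesis unfolding mnorm_def[abs_def]
    by (rule has_derivative_eq_rhs) (simp add: fun_eq_iff field_simps)
qed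

definition Bm :: "(real \<times> real \<times> real \<Rightarrow> real) \<Rightarrow> (real \<times> real \<times> real \<Rightarrow> real \<times> real \<times> real \<Rightarrow> real)
   \<Rightarrow> mat3 \<Rightarrow> mat3 \<Rightarrow> mat3" where
  "Bm g g' S W =
    (2 * g (invs S W) - 3 * fst (invs S W) * g' (invs S W) (1, 0, 0)
       - 2 * fst (snd (invs S W)) * g' (invs S W) (0, 1, 0)
       - 3 * snd (snd (invs S W)) * g' (invs S W) (0, 0, 1)) *\<^sub>R S
    + (3 / mnorm S * g' (invs S W) (1, 0, 0)) *\<^sub>R (S ** S)
    + (1 / mnorm S * g' (invs S W) (0, 0, 1)) *\<^sub>R (W ** W)"

lemma model_Bm: "model g g' S W =
    (2 * g (invs S W) - 3 * fst (invs S W) * g' (invs S W) (1, 0, 0)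
       - 2 * fst (snd (invs S W)) * g' (invs S W) (0, 1, 0)
       - 3 * snd (snd (invs S W)) * g' (invs S W) (0, 0, 1)) *\<^sub>R S
    + (3 / mnorm S * g' (invs S W) (1, 0, 0)) *\<^sub>R dev (S ** S)
    + (1 / mnorm S * g' (invs S W) (0, 0, 1)) *\<^sub>R dev (W ** W)"
  unfolding model_def Let_def ..

lemma trace_Bm: "trace (Bm g g' S W ** H) =
    (2 * g (invs S W) - 3 * fst (invs S W) * g' (invs S W) (1, 0, 0)
       - 2 * fst (snd (invs S W)) * g' (invs S W) (0, 1, 0)
       - 3 * snd (snd (invs S W)) * g' (invs S W) (0, 0, 1)) * trace (S ** H)
    + (3 / mnorm S * g' (invs S W) (1, 0, 0)) * trace (S ** S ** H)
    + (1 / mnorm S * g' (invs S W) (0, 0, 1)) * trace (W ** W ** H)"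
  unfolding Bm_def by (simp only: mat_add_rdistrib mat_scaleR_left trace_add trace_scaleR)

lemma g'_expand: assumes "linear (L :: real \<times> real \<times> real \<Rightarrow> real)"
  shows "L (x, y, z) = x * L (1, 0, 0) + y * L (0, 1, 0) + z * L (0, 0, 1)"
proof -
  have "(x, y, z) = x *\<^sub>R (1, 0, 0) + y *\<^sub>R (0, 1, 0) + z *\<^sub>R ((0::real), (0::real), (1::real))" by simp
  then have "L (x, y, z) = L (x *\<^sub>R (1, 0, 0) + y *\<^sub>R (0, 1, 0) + z *\<^sub>R (0, 0, 1))" by simp
  also have "\<dots> = x * L (1, 0, 0) + y * L (0, 1, 0) + z * L (0, 0, 1)"
    by (simp only: linear_add[OF assms] linear_cmul[OF assms] real_scaleR_def)
  finally show ?thesis .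
qed

lemma alg: fixes n :: real assumes "n > 0" shows
 "n^2 * ((3 * b / n^3 - 3 * (T3 / n^3) * a / n^2) * g1 + (- 2 * (C / n^2) * a / n^2) * g3
      + (d / n^3 - 3 * (T4 / n^3) * a / n^2) * g4) + 2 * a * G
  = (2 * G - 3 * (T3 / n^3) * g1 - 2 * (C / n^2) * g3 - 3 * (T4 / n^3) * g4) * a
    + (3 / n * g1) * b + (1 / n * g4) * d"
  using assms by (simp add: field_simps power2_eq_square power3_eq_cube)

lemma alg1: fixes n :: real assumes "n > 0" shows
  "(\<lambda>h. (3 * b h * n ^ 3 - T * (real 3 * (a h / n) * n ^ (3 - 1))) / (n ^ 3 * n ^ 3))
   = (\<lambda>h. 3 * b h / n ^ 3 - 3 * (T / n ^ 3) * a h / n ^ 2)"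
  using assms by (simp add: fun_eq_iff field_simps power2_eq_square power3_eq_cube)

lemma alg4: fixes n :: real assumes "n > 0" shows
  "(\<lambda>h. (b h * n ^ 3 - T * (real 3 * (a h / n) * n ^ (3 - 1))) / (n ^ 3 * n ^ 3))
   = (\<lambda>h. b h / n ^ 3 - 3 * (T / n ^ 3) * a h / n ^ 2)"
  using assms by (simp add: fun_eq_iff field_simps power2_eq_square power3_eq_cube)

lemma alg3: fixes n :: real assumes "n > 0" shows
  "(\<lambda>h. (0 * n ^ 2 - C * (real 2 * (a h / n) * n ^ (2 - 1))) / (n ^ 2 * n ^ 2))
   = (\<lambda>h. - 2 * (C / n ^ 2) * a h / n ^ 2)"
  using assms by (simp add: fun_eq_iff field_simps power2_eq_square power3_eq_cube)

lemma hphi: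
  fixes S W :: mat3
  assumes hg: "\<And>v. (g has_derivative g' v) (at v)" and pos: "trace (S ** S) > 0"
  shows "((\<lambda>X. trace (X ** X) * g (invs X W)) has_derivative (\<lambda>H. trace (Bm g g' S W ** H))) (at S)"
proof -
  define n where "n = mnorm S"
  have n0: "n > 0" unfolding n_def mnorm_def using pos by simp
  have n2: "trace (S ** S) = n ^ 2" unfolding n_def mnorm_def using pos by simp
  have hN': "(mnorm has_derivative (\<lambda>H. trace (S ** H) / n)) (at S)"
    using hN[OF pos] unfolding n_def .
  have nS: "mnorm S = n" unfolding n_def ..
  define D1 where "D1 = (\<lambda>H. 3 * trace (S ** S ** H) / n ^ 3 - 3 * (trace (S ** S ** S) / n ^ 3) * trace (S ** H) / n ^ 2)"
  define D3 where "D3 = (\<lambda>H. - 2 * (trace (W ** W) / n ^ 2) * trace (S ** H) / n ^ 2)"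
  define D4 where "D4 = (\<lambda>H. trace (W ** W ** H) / n ^ 3 - 3 * (trace (S ** W ** W) / n ^ 3) * trace (S ** H) / n ^ 2)"
  have nz3: "mnorm S ^ 3 \<noteq> 0" using n0 nS by simp
  have nz2: "mnorm S ^ 2 \<noteq> 0" using n0 nS by simp
  have h1: "((\<lambda>X. trace (X ** X ** X) / mnorm X ^ 3) has_derivative D1) (at S)"
    using has_derivative_divide'[OF hT3 has_derivative_power[OF hN'] nz3]
    unfolding nS D1_def alg1[OF n0] .
  have h3: "((\<lambda>X. trace (W ** W) / mnorm X ^ 2) has_derivative D3) (at S)"
    using has_derivative_divide'[OF has_derivative_const has_derivative_power[OF hN'] nz2]
    unfolding nS D3_def alg3[OF n0] .
  have h4: "((\<lambda>X. trace (X ** W ** W) / mnorm X ^ 3) has_derivative D4) (at S)"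
    using has_derivative_divide'[OF hT4 has_derivative_power[OF hN'] nz3]
    unfolding nS D4_def alg4[OF n0] .
  have hinv: "((\<lambda>X. invs X W) has_derivative (\<lambda>H. (D1 H, D3 H, D4 H))) (at S)"
    unfolding invs_def by (intro has_derivative_Pair h1 h3 h4)
  have hgi: "((\<lambda>X. g (invs X W)) has_derivative (\<lambda>H. g' (invs S W) (D1 H, D3 H, D4 H))) (at S)"
    using has_derivative_compose[OF hinv hg] .
  have lg: "linear (g' (invs S W))" using hg has_derivative_linear by blast
  have hm: "((\<lambda>X. trace (X ** X) * g (invs X W)) has_derivative
      (\<lambda>H. trace (S ** S) * g' (invs S W) (D1 H, D3 H, D4 H) + 2 * trace (S ** H) * g (invs S W))) (at S)"
    using has_derivative_mult[OF hN2 hgi] .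
  show ?thesis
  proof (rule has_derivative_eq_rhs[OF hm], rule ext)
    fix H
    show "trace (S ** S) * g' (invs S W) (D1 H, D3 H, D4 H) + 2 * trace (S ** H) * g (invs S W)
        = trace (Bm g g' S W ** H)"
      unfolding trace_Bm g'_expand[OF lg, of "D1 H" "D3 H" "D4 H"]
      unfolding n2 nS D1_def D3_def D4_def invs_def fst_conv snd_conv
      by (rule alg[OF n0])
  qed
qed

lemma trace_I3: "trace (mat 1 :: mat3) = 3"
  by (simp add: trace_I)

lemma dev_add: "dev (A + B) = dev A + dev (B::mat3)"
  unfolding dev_def by (simp add: trace_add scaleR_add_left algebra_simps add_divide_distrib)

lemma dev_scale: "dev (c *\<^sub>R A) = c *\<^sub>R dev (A::mat3)"
  unfolding dev_def by (simp add: trace_scaleR algebra_simps)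

lemma trace_dev: "trace (dev (A::mat3)) = 0"
  unfolding dev_def by (simp add: trace_sub trace_scaleR trace_I3)

lemma dev_dev: "dev (dev (A::mat3)) = dev A"
  using trace_dev[of A] unfolding dev_def[of "dev A"] by simp

lemma dev_tr0: "trace (A::mat3) = 0 \<Longrightarrow> dev A = A"
  unfolding dev_def by simp

lemma transpose_add': "transpose (A + B) = transpose A + transpose (B::mat3)"
  by (simp add: transpose_def vec_eq_iff)

lemma transpose_scaleR': "transpose (c *\<^sub>R A) = c *\<^sub>R transpose (A::mat3)"
  by (simp add: transpose_def vec_eq_iff)

lemma neg_mm: "(- A) ** (- B) = A ** (B::mat3)"
  by (simp add: matrix_matrix_mult_def vec_eq_iff)

lemma sym_Bm: assumes "sym_mat S" "skew_mat W" shows "sym_mat (Bm g g' S W)"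
proof -
  have tS: "transpose S = S" using assms unfolding sym_mat_def by simp
  have tW: "transpose W = - W" using assms unfolding skew_mat_def by simp
  show ?thesis unfolding sym_mat_def Bm_def
    by (simp only: transpose_add' transpose_scaleR' matrix_transpose_mul tS tW neg_mm)
qed

lemma pos_trace: assumes "sym_mat S" "S \<noteq> (0::mat3)" shows "trace (S ** S) > 0"
proof -
  have tS: "\<And>i k. S $ k $ i = S $ i $ k" using assms(1) unfolding sym_mat_def transpose_def
    by (metis vec_lambda_beta)
  obtain i k where ik: "S $ i $ k \<noteq> 0" using assms(2) by (metis vec_eq_iff zero_index)
  have e: "trace (S ** S) = (\<Sum>i\<in>UNIV. \<Sum>k\<in>UNIV. (S $ i $ k)^2)"
    unfolding trace_def matrix_matrix_mult_def by (simp add: tS[of _ "_"] power2_eq_square)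
  have p1: "0 < (\<Sum>k\<in>UNIV. (S $ i $ k)^2)"
    by (rule sum_pos2[where f="\<lambda>k. (S $ i $ k)^2" and i=k]) (use ik in auto)
  have "0 < (\<Sum>i\<in>UNIV. \<Sum>k\<in>UNIV. (S $ i $ k)^2)"
    by (rule sum_pos2[where f="\<lambda>i. \<Sum>k\<in>UNIV. (S $ i $ k)^2" and i=i]) (use p1 in \<open>auto intro: sum_nonneg\<close>)
  then show ?thesis using e by simp
qed

lemma potential: assumes hg: "\<And>v. (g has_derivative g' v) (at v)"
  shows "derives_from_potential (model g g')"
  unfolding derives_from_potential_def
proof (intro exI[of _ "\<lambda>S W. trace (S ** S) * g (invs S W)"] allI impI)
  fix S W :: mat3
  assume sS: "sym_mat S" and t0: "trace S = 0" and nz: "S \<noteq> 0" and sW: "skew_mat W"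
  have pos: "trace (S ** S) > 0" by (rule pos_trace[OF sS nz])
  have hd: "((\<lambda>X. trace (X ** X) * g (invs X W)) has_derivative (\<lambda>H. trace (Bm g g' S W ** H))) (at S)"
    by (rule hphi[OF hg pos])
  let ?f = "\<lambda>H. (trace ((S + H) ** (S + H)) * g (invs (S + H) W) - trace (S ** S) * g (invs S W)
       - trace (Bm g g' S W ** H)) / norm H"
  have "((\<lambda>h. norm (trace ((S + h) ** (S + h)) * g (invs (S + h) W) - trace (S ** S) * g (invs S W)
       - trace (Bm g g' S W ** h)) / norm h) \<longlongrightarrow> 0) (at 0)"
    using hd unfolding has_derivative_at by blast
  then have "((\<lambda>h. norm (?f h)) \<longlongrightarrow> 0) (at 0)"
    by (simp add: norm_divide)
  then have "(?f \<longlongrightarrow> 0) (at 0)"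
    by (rule tendsto_norm_zero_cancel)
  then have lim: "(?f \<longlongrightarrow> 0) (at 0 within {H. sym_mat H})"
    by (rule tendsto_within_subset) simp
  have dphi: "is_dphi_dS (\<lambda>S W. trace (S ** S) * g (invs S W)) S W (Bm g g' S W)"
    unfolding is_dphi_dS_def using sym_Bm[OF sS sW] lim by simp
  have dv: "dev (model g g' S W) = dev (Bm g g' S W)"
    unfolding model_Bm Bm_def by (simp only: dev_add dev_scale dev_dev)
  show "\<exists>B. is_dphi_dS (\<lambda>S W. trace (S ** S) * g (invs S W)) S W B \<and> dev (model g g' S W) = dev B"
    using dphi dv by blast
qed

theorem theorem3:
  fixes g :: "real \<times> real \<times> real \<Rightarrow> real"
    and g' :: "real \<times> real \<times> real \<Rightarrow> real \<times> real \<times> real \<Rightarrow> real"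
    and \<nu> \<rho> :: real
  assumes "\<nu> > 0" and "\<rho> > 0"
    and "\<And>v. (g has_derivative g' v) (at v)"
  shows "invariant_Gt \<nu> \<rho> (model g g') \<and> invariant_Gal \<nu> \<rho> (model g g')
       \<and> invariant_SO3 \<nu> \<rho> (model g g') \<and> invariant_Gp \<nu> \<rho> (model g g')
       \<and> derives_from_potential (model g g')"
  using Gt Gal[OF assms(2)] SO3inv Gp potential[OF assms(3)] by blast

end
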